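(* For every integer $n\ge 1$, $$m^*(n,3,2)=\min\Big\{m : \binom{m}{2}-K(m,2,3,1)\ge n\Big\}=\lceil 2\sqrt{n}\rceil.$$
   Context: For positive integers $s,u,v,e$, $K(s,u,v,e)$ is the smallest number of binary vectors of length $s$ and weight $u$ such that every binary vector of length $s$ and weight $v$ is at Hamming distance at most $e$ from at least one of them. For a binary matrix $M$ and a nonempty set $S$ of its columns, $S$ is a stopping set if the submatrix formed by $S$ has no row with exactly one $1$; $s(M)$ is the minimum size of a stopping set ($+\infty$ if none). $M$ is $(d,k)$-decodable if $s(M)\ge d+1$ and every column has exactly $k$ ones; $m^*(n,d,k)$ is the minimum $m$ such that an $m\times n$ $(d,k)$-decodable binary matrix exists. *)

theory Defs
  imports Complex_Main "HOL-Library.Extended_Nat"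
begin

(* Binary vectors of length s are represented by their supports: subsets of {..<s}.
   Weight = card, Hamming distance = card of the symmetric difference. *)
definition hdist :: "nat set \<Rightarrow> nat set \<Rightarrow> nat" where
  "hdist A B = card ((A - B) \<union> (B - A))"

definition covering :: "nat \<Rightarrow> nat \<Rightarrow> nat \<Rightarrow> nat \<Rightarrow> nat set set \<Rightarrow> bool" where
  "covering s u v e C \<longleftrightarrow>
     C \<subseteq> {A. A \<subseteq> {..<s} \<and> card A = u} \<and>
     (\<forall>B. B \<subseteq> {..<s} \<and> card B = v \<longrightarrow> (\<exists>A\<in>C. hdist A B \<le> e))"

definition K :: "nat \<Rightarrow> nat \<Rightarrow> nat \<Rightarrow> nat \<Rightarrow> nat" where
  "K s u v e = (LEAST N. \<exists>C. covering s u v e C \<and> card C = N)"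

(* An m x n binary matrix is M :: nat => nat => bool, entry (i,j) = M i j, for i<m, j<n. *)
definition stopping_set :: "nat \<Rightarrow> nat \<Rightarrow> (nat \<Rightarrow> nat \<Rightarrow> bool) \<Rightarrow> nat set \<Rightarrow> bool" where
  "stopping_set m n M S \<longleftrightarrow>
     S \<noteq> {} \<and> S \<subseteq> {..<n} \<and> (\<forall>i<m. card {j\<in>S. M i j} \<noteq> 1)"

(* s(M): minimum size of a stopping set, infinity if there is none *)
definition stop_num :: "nat \<Rightarrow> nat \<Rightarrow> (nat \<Rightarrow> nat \<Rightarrow> bool) \<Rightarrow> enat" where
  "stop_num m n M = Inf ((\<lambda>S. enat (card S)) ` {S. stopping_set m n M S})"

definition decodable :: "nat \<Rightarrow> nat \<Rightarrow> nat \<Rightarrow> nat \<Rightarrow> (nat \<Rightarrow> nat \<Rightarrow> bool) \<Rightarrow> bool" where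
  "decodable m n d k M \<longleftrightarrow>
     stop_num m n M \<ge> enat (d + 1) \<and> (\<forall>j<n. card {i. i < m \<and> M i j} = k)"

definition mstar :: "nat \<Rightarrow> nat \<Rightarrow> nat \<Rightarrow> nat" where
  "mstar n d k = (LEAST m. \<exists>M. decodable m n d k M)"

end

theory Submission
  imports Defs
begin


definition pairs :: "nat set \<Rightarrow> nat set set" where
  "pairs V = {e. e \<subseteq> V \<and> card e = 2}"

definition tfree :: "nat set set \<Rightarrow> bool" where
  "tfree E \<longleftrightarrow> (\<forall>x y z. {x,y} \<in> E \<longrightarrow> {y,z} \<in> E \<longrightarrow> {x,z} \<in> E \<longrightarrow> False)"

lemma pair_in: "e \<in> pairs V \<Longrightarrow> x \<in> e \<Longrightarrow> \<exists>w. w \<noteq> x \<and> e = {x,w}"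
  unfolding pairs_def by (auto simp: card_2_iff)

lemma mantel:
  assumes "finite V" "E \<subseteq> pairs V" "tfree E"
  shows "4 * card E \<le> card V ^ 2"
  using assms
proof (induction "card V" arbitrary: V E rule: less_induct)
  case less
  show ?case
  proof (cases "E = {}")
    case True then show ?thesis by simp
  next
    case False
    then obtain e where e: "e \<in> E" by blast
    then obtain x y where xy: "e = {x,y}" "x \<noteq> y" "x \<in> V" "y \<in> V"
      using less.prems unfolding pairs_def by (auto simp: card_2_iff)
    define V' where "V' = V - {x,y}"
    define E' where "E' = {f\<in>E. f \<subseteq> V'}"
    have cV': "card V' = card V - 2" unfolding V'_def using xy less.prems
      by (simp add: card_Diff_subset)
    have c2: "card V \<ge> 2"
    proof -
      have "{x,y} \<subseteq> V" using xy by auto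
      then have "card {x,y} \<le> card V" using less.prems card_mono by blast
      then show ?thesis using xy by simp
    qed
    have h1: "card V' < card V" using c2 cV' by simp
    have h2: "finite V'" using less.prems unfolding V'_def by simp
    have h3: "E' \<subseteq> pairs V'"
    proof
      fix f assume "f \<in> E'"
      then have "f \<in> E" "f \<subseteq> V'" unfolding E'_def by auto
      then show "f \<in> pairs V'" using less.prems(2) unfolding pairs_def by blast
    qed
    have h4: "tfree E'" using less.prems(3) unfolding E'_def tfree_def by auto
    have IH: "4 * card E' \<le> card V' ^ 2"
      using less.hyps[OF h1 h2 h3 h4] .
    have finE: "finite E"
      using less.prems(1,2) finite_subset[of E "Pow V"] unfolding pairs_def by auto
    define Nx where "Nx = {w. {x,w} \<in> E}"
    define Ny where "Ny = {w. {y,w} \<in> E} - {x}"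
    have sub: "E - E' \<subseteq> (\<lambda>w. {x,w}) ` Nx \<union> (\<lambda>w. {y,w}) ` Ny"
    proof
      fix f assume f: "f \<in> E - E'"
      then have fp: "f \<in> pairs V" using less.prems by auto
      have "x \<in> f \<or> y \<in> f" using f fp unfolding E'_def V'_def pairs_def by auto
      then show "f \<in> (\<lambda>w. {x,w}) ` Nx \<union> (\<lambda>w. {y,w}) ` Ny"
      proof
        assume "x \<in> f"
        then obtain w where "f = {x,w}" using pair_in fp by blast
        then show ?thesis using f unfolding Nx_def by auto
      next
        assume yf: "y \<in> f"
        then obtain w where w: "f = {y,w}" "w \<noteq> y" using pair_in fp by blast
        show ?thesis
        proof (cases "w = x")
          case True then show ?thesis using w f unfolding Nx_def by (auto simp: insert_commute)
        next
          case False then show ?thesis using w f unfolding Ny_def by auto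
        qed
      qed
    qed
    have finV: "finite (Nx \<union> Ny)"
    proof -
      have "Nx \<union> Ny \<subseteq> V" using less.prems unfolding Nx_def Ny_def pairs_def by auto
      then show ?thesis using less.prems finite_subset by blast
    qed
    have disj: "Nx \<inter> Ny = {}"
    proof (rule ccontr)
      assume "Nx \<inter> Ny \<noteq> {}"
      then obtain w where "{x,w} \<in> E" "{y,w} \<in> E" unfolding Nx_def Ny_def by auto
      moreover have "{x,y} \<in> E" using e xy by simp
      ultimately show False using less.prems(3)[unfolded tfree_def, rule_format, of x y w] by simp
    qed
    have "Nx \<union> Ny \<subseteq> V - {x}"
    proof -
      have "x \<notin> Nx"
      proof
        assume "x \<in> Nx" then have "{x} \<in> E" unfolding Nx_def by simp
        then show False using less.prems unfolding pairs_def by auto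
      qed
      moreover have "Nx \<union> Ny \<subseteq> V" using less.prems unfolding Nx_def Ny_def pairs_def by auto
      ultimately show ?thesis unfolding Ny_def by auto
    qed
    then have "card (Nx \<union> Ny) \<le> card V - 1"
      using less.prems xy by (metis card_Diff_singleton card_mono finite_Diff)
    then have cN: "card Nx + card Ny \<le> card V - 1"
      using disj finV by (simp add: card_Un_disjoint)
    have "card (E - E') \<le> card ((\<lambda>w. {x,w}) ` Nx \<union> (\<lambda>w. {y,w}) ` Ny)"
      using sub finV by (intro card_mono) auto
    also have "\<dots> \<le> card ((\<lambda>w. {x,w}) ` Nx) + card ((\<lambda>w. {y,w}) ` Ny)"
      by (rule card_Un_le)
    also have "\<dots> \<le> card Nx + card Ny"
      using finV by (intro add_mono card_image_le) auto
    finally have cD: "card (E - E') \<le> card V - 1" using cN by linarith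
    have "card E = card E' + card (E - E')"
    proof -
      have "E' \<subseteq> E" unfolding E'_def by auto
      moreover have "finite E'" using finE \<open>E' \<subseteq> E\<close> finite_subset by blast
      ultimately have "card (E - E') = card E - card E'" by (simp add: card_Diff_subset)
      moreover have "card E' \<le> card E" using \<open>E' \<subseteq> E\<close> finE card_mono by blast
      ultimately show ?thesis by simp
    qed
    then have "4 * card E \<le> (card V - 2)^2 + 4 * (card V - 1)"
      using IH cV' cD by simp
    also have "\<dots> = card V ^ 2"
    proof -
      define c where "c = card V - 2"
      have "card V = c + 2" using c2 c_def by simp
      then show ?thesis by (simp add: power2_eq_square algebra_simps)
    qed
    finally show ?thesis .
  qed
qed



lemma hdist_sub: "finite B \<Longrightarrow> A \<subseteq> B \<Longrightarrow> card A = 2 \<Longrightarrow> card B = 3 \<Longrightarrow> hdist A B = 1"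
proof -
  assume a: "finite B" "A \<subseteq> B" "card A = 2" "card B = 3"
  have "(A - B) \<union> (B - A) = B - A" using a by auto
  then show ?thesis unfolding hdist_def using a by (simp add: card_Diff_subset finite_subset)
qed

lemma hdist_imp_sub:
  assumes "finite A" "finite B" "card A = 2" "card B = 3" "hdist A B \<le> 1"
  shows "A \<subseteq> B"
proof -
  have "card (B - A) \<ge> 1" using diff_card_le_card_Diff[of A B] assms by simp
  moreover have "card ((A - B) \<union> (B - A)) = card (A - B) + card (B - A)"
    using assms by (intro card_Un_disjoint) auto
  ultimately have "card (A - B) = 0" using assms(5) unfolding hdist_def by linarith
  then show ?thesis using assms by simp
qed

lemma sub3:
  assumes "A \<subseteq> {x,y,z}" "card A = 2"
  shows "A = {x,y} \<or> A = {y,z} \<or> A = {x,z}"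
proof -
  obtain a b where ab: "A = {a,b}" "a \<noteq> b" using assms(2) card_2_iff by metis
  then have "a \<in> {x,y,z}" "b \<in> {x,y,z}" using assms(1) by auto
  then show ?thesis using ab by (auto simp: insert_commute)
qed


lemma arith4: "4*d \<le> (m::nat)^2 \<longleftrightarrow> d \<le> (m div 2)*(m - m div 2)"
proof (cases "even m")
  case True
  then obtain k where "m = 2*k" by blast
  then show ?thesis by (simp add: power2_eq_square)
next
  case False
  then obtain k where m: "m = 2*k+1" using oddE by blast
  have e1: "m^2 = 4*(k*k+k) + 1" using m by (simp add: power2_eq_square algebra_simps)
  have e2: "(m div 2)*(m - m div 2) = k*k+k" using m by simp
  have t: "\<And>t::nat. (4*d \<le> 4*t+1) = (d \<le> t)" by presburger
  show ?thesis unfolding e1 e2 by (rule t)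
qed

lemma finite_pairs: "finite V \<Longrightarrow> finite (pairs V)"
  unfolding pairs_def by (rule finite_subset[of _ "Pow V"]) auto

lemma K_val:
  "K m 2 3 1 = (m choose 2) - (m div 2) * (m - m div 2) \<and> (m div 2) * (m - m div 2) \<le> m choose 2"
proof -
  define h where "h = m div 2"
  define P where "P = pairs {..<m}"
  define X where "X = (\<lambda>(a,b). {a::nat,b}) ` ({..<h} \<times> {h..<m})"
  have cardP: "card P = m choose 2" unfolding P_def pairs_def using n_subsets[of "{..<m}" 2] by simp
  have finP: "finite P" unfolding P_def by (simp add: finite_pairs)
  have inj: "inj_on (\<lambda>(a,b). {a::nat,b}) ({..<h} \<times> {h..<m})"
    by (auto simp: inj_on_def doubleton_eq_iff)
  have cardX: "card X = h * (m - h)" unfolding X_def using card_image[OF inj] by (simp add: card_cartesian_product)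
  have XP: "X \<subseteq> P" unfolding X_def P_def pairs_def h_def by auto
  define C0 where "C0 = P - X"
  have cardC0: "card C0 = card P - card X" unfolding C0_def using XP finP by (simp add: card_Diff_subset finite_subset)
  have cov: "covering m 2 3 1 C0"
    unfolding covering_def
  proof (intro conjI allI impI)
    show "C0 \<subseteq> {A. A \<subseteq> {..<m} \<and> card A = 2}" unfolding C0_def P_def pairs_def by auto
  next
    fix B assume B: "B \<subseteq> {..<m} \<and> card B = 3"
    then obtain x y z where xyz: "B = {x,y,z}" "x \<noteq> y" "y \<noteq> z" "x \<noteq> z" using card_3_iff by metis
    have "\<exists>u v. u \<in> B \<and> v \<in> B \<and> u \<noteq> v \<and> (u < h \<longleftrightarrow> v < h)"
    proof (cases "x < h \<longleftrightarrow> y < h")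
      case True then show ?thesis using xyz by blast
    next
      case F1: False
      show ?thesis
      proof (cases "x < h \<longleftrightarrow> z < h")
        case True then show ?thesis using xyz by blast
      next
        case False then have "y < h \<longleftrightarrow> z < h" using F1 by blast
        then show ?thesis using xyz by blast
      qed
    qed
    then obtain u v where uv: "u \<in> B" "v \<in> B" "u \<noteq> v" "u < h \<longleftrightarrow> v < h" by blast
    have AP: "{u,v} \<in> P" using uv B unfolding P_def pairs_def by auto
    have AX: "{u,v} \<notin> X"
    proof
      assume "{u,v} \<in> X"
      then obtain a b where "{u,v} = {a,b}" "a < h" "h \<le> b" unfolding X_def by auto
      then show False using uv by (auto simp: doubleton_eq_iff)
    qed
    have "hdist {u,v} B = 1" using B uv by (intro hdist_sub) (auto simp: finite_subset)
    then show "\<exists>A\<in>C0. hdist A B \<le> 1" using AP AX unfolding C0_def by force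
  qed
  have lower: "card P - card X \<le> card C" if C: "covering m 2 3 1 C" for C
  proof -
    have CP: "C \<subseteq> P" using C unfolding covering_def P_def pairs_def by auto
    define D where "D = P - C"
    have DP: "D \<subseteq> pairs {..<m}" unfolding D_def P_def by auto
    have tf: "tfree D" unfolding tfree_def
    proof (intro allI impI)
      fix x y z assume a: "{x,y} \<in> D" "{y,z} \<in> D" "{x,z} \<in> D"
      then have d: "x \<noteq> y" "y \<noteq> z" "x \<noteq> z" "x < m" "y < m" "z < m"
        proof -
        have "{x,y} \<in> pairs {..<m}" "{y,z} \<in> pairs {..<m}" "{x,z} \<in> pairs {..<m}" using a DP by auto
        then show "x \<noteq> y" "y \<noteq> z" "x \<noteq> z" "x < m" "y < m" "z < m" unfolding pairs_def by auto
      qed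
      have B3: "{x,y,z} \<subseteq> {..<m} \<and> card {x,y,z} = 3" using d by auto
      have cv: "\<forall>B. B \<subseteq> {..<m} \<and> card B = 3 \<longrightarrow> (\<exists>A\<in>C. hdist A B \<le> 1)"
        using C unfolding covering_def by blast
      obtain A where A: "A \<in> C" "hdist A {x,y,z} \<le> 1" using cv[rule_format, OF B3] by blast
      have cA: "card A = 2" using A(1) CP unfolding P_def pairs_def by auto
      have fA: "finite A" using cA card.infinite by fastforce
      have "A \<subseteq> {x,y,z}"
        by (rule hdist_imp_sub[OF fA _ cA _ A(2)]) (use B3 in auto)
      then have "A = {x,y} \<or> A = {y,z} \<or> A = {x,z}" by (rule sub3[OF _ cA])
      moreover have "A \<notin> D" using A(1) unfolding D_def by auto
      ultimately show False using a by (elim disjE) simp_all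
    qed
    have "4 * card D \<le> m^2" using mantel[OF _ DP tf] by simp
    then have cD: "card D \<le> h * (m - h)" unfolding h_def using arith4 by blast
    have "P \<subseteq> C \<union> D" unfolding D_def by auto
    then have "card P \<le> card (C \<union> D)" using finP CP by (intro card_mono) (auto simp: D_def intro: finite_subset)
    also have "\<dots> \<le> card C + card D" by (rule card_Un_le)
    finally show ?thesis using cD cardX by linarith
  qed
  have "K m 2 3 1 = card P - card X"
    unfolding K_def
  proof (rule Least_equality)
    show "\<exists>C. covering m 2 3 1 C \<and> card C = card P - card X" using cov cardC0 by blast
  next
    fix N assume "\<exists>C. covering m 2 3 1 C \<and> card C = N"
    then show "card P - card X \<le> N" using lower by blast
  qed
  moreover have "card X \<le> card P" using XP finP card_mono by blast
  ultimately show ?thesis using cardP cardX h_def by simp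
qed



lemma other:
  assumes "stopping_set m n M S" "i < m" "k \<in> S" "M i k"
  shows "\<exists>k'\<in>S. k' \<noteq> k \<and> M i k'"
proof (rule ccontr)
  assume "\<not> ?thesis"
  then have "{j\<in>S. M i j} = {k}" using assms(3,4) by auto
  then show False using assms(1,2) unfolding stopping_set_def by auto
qed

lemma construct:
  assumes "n \<ge> 1" "4*n \<le> m^2"
  shows "\<exists>M. decodable m n 3 2 M"
proof -
  define a where "a = m div 2"
  define b where "b = m - a"
  have nab: "n \<le> a*b" using assms(2) arith4 unfolding a_def b_def by blast
  then have bpos: "b > 0" using assms(1) by (cases b) auto
  have mab: "m = a + b" unfolding a_def b_def by simp
  define M where "M = (\<lambda>i j. i = j div b \<or> i = a + j mod b)"
  have jdiv: "j div b < a" if "j < n" for j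
    using that nab bpos by (metis div_less_iff_less_mult less_le_trans mult.commute)
  have jmod: "j mod b < b" for j using bpos by simp
  have col: "card {i. i < m \<and> M i j} = 2" if j: "j < n" for j
  proof -
    have "{i. i < m \<and> M i j} = {j div b, a + j mod b}"
      using jdiv[OF j] jmod[of j] mab unfolding M_def by auto
    moreover have "j div b \<noteq> a + j mod b" using jdiv[OF j] by simp
    ultimately show ?thesis by simp
  qed
  have big: "card S \<ge> 4" if S: "stopping_set m n M S" for S
  proof -
    have Sn: "S \<subseteq> {..<n}" and Sne: "S \<noteq> {}" using S unfolding stopping_set_def by auto
    have finS: "finite S" using Sn finite_subset by blast
    obtain j where j: "j \<in> S" using Sne by blast
    have jn: "\<And>k. k \<in> S \<Longrightarrow> k < n" using Sn by auto
    have "\<exists>k'\<in>S. k' \<noteq> j \<and> M (j div b) k'"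
      by (rule other[OF S _ j]) (use jdiv[OF jn[OF j]] mab in \<open>auto simp: M_def\<close>)
    then obtain j1 where j1: "j1 \<in> S" "j1 \<noteq> j" "M (j div b) j1" by blast
    have d1: "j1 div b = j div b" using j1(3) jdiv[OF jn[OF j]] unfolding M_def by auto
    have "\<exists>k'\<in>S. k' \<noteq> j \<and> M (a + j mod b) k'"
      by (rule other[OF S _ j]) (use jmod[of j] mab in \<open>auto simp: M_def\<close>)
    then obtain j2 where j2: "j2 \<in> S" "j2 \<noteq> j" "M (a + j mod b) j2" by blast
    have m2: "j2 mod b = j mod b" using j2(3) jdiv[OF jn[OF j2(1)]] unfolding M_def by auto
    have d2: "j2 div b \<noteq> j div b"
    proof
      assume "j2 div b = j div b"
      then have "j2 = j" using m2 by (metis div_mult_mod_eq)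
      then show False using j2(2) by simp
    qed
    have "\<exists>k'\<in>S. k' \<noteq> j2 \<and> M (j2 div b) k'"
      by (rule other[OF S _ j2(1)]) (use jdiv[OF jn[OF j2(1)]] mab in \<open>auto simp: M_def\<close>)
    then obtain j3 where j3: "j3 \<in> S" "j3 \<noteq> j2" "M (j2 div b) j3" by blast
    have d3: "j3 div b = j2 div b" using j3(3) jdiv[OF jn[OF j2(1)]] unfolding M_def by auto
    have dist: "j \<noteq> j1" "j \<noteq> j2" "j \<noteq> j3" "j1 \<noteq> j2" "j1 \<noteq> j3" "j2 \<noteq> j3"
      using j1(2) j2(2) j3(2) d1 d2 d3 by metis+
    have "card {j,j1,j2,j3} = 4" using dist by simp
    moreover have "{j,j1,j2,j3} \<subseteq> S" using j j1 j2 j3 by auto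
    ultimately show ?thesis using finS card_mono by metis
  qed
  have "decodable m n 3 2 M"
    unfolding decodable_def
  proof (intro conjI allI impI)
    show "enat (3 + 1) \<le> stop_num m n M"
      unfolding stop_num_def
    proof (rule Inf_greatest)
      fix x assume "x \<in> (\<lambda>S. enat (card S)) ` {S. stopping_set m n M S}"
      then show "enat (3 + 1) \<le> x" using big by auto
    qed
  next
    fix j assume "j < n" then show "card {i. i < m \<and> M i j} = 2" by (rule col)
  qed
  then show ?thesis by blast
qed


lemma stop_big:
  assumes "decodable m n 3 2 M" "stopping_set m n M S"
  shows "card S \<ge> 4"
proof -
  have "stop_num m n M \<le> enat (card S)" unfolding stop_num_def
    by (rule Inf_lower) (use assms(2) in auto)
  moreover have "enat 4 \<le> stop_num m n M" using assms(1) unfolding decodable_def by simp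
  ultimately have "enat 4 \<le> enat (card S)" by (meson order_trans)
  then show ?thesis by simp
qed

lemma necessary:
  assumes D: "decodable m n 3 2 M"
  shows "4*n \<le> m^2"
proof -
  define col where "col = (\<lambda>j. {i. i < m \<and> M i j})"
  have ccol: "card (col j) = 2" if "j < n" for j using D that unfolding decodable_def col_def by auto
  have colm: "i \<in> col j \<longleftrightarrow> i < m \<and> M i j" for i j unfolding col_def by simp
  have inj: "inj_on col {..<n}"
  proof (rule inj_onI, rule ccontr)
    fix j j' assume jj: "j \<in> {..<n}" "j' \<in> {..<n}" "col j = col j'" "j \<noteq> j'"
    have "stopping_set m n M {j,j'}" unfolding stopping_set_def
    proof (intro conjI allI impI)
      show "{j,j'} \<noteq> {}" by simp
      show "{j,j'} \<subseteq> {..<n}" using jj by auto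
    next
      fix i assume i: "i < m"
      have "M i j \<longleftrightarrow> M i j'" using jj(3) i colm by blast
      then have "{k\<in>{j,j'}. M i k} = {j,j'} \<or> {k\<in>{j,j'}. M i k} = {}" by auto
      moreover have "\<And>T. T = {j,j'} \<or> T = {} \<Longrightarrow> card T \<noteq> 1" using jj(4) by auto
      ultimately show "card {k\<in>{j,j'}. M i k} \<noteq> 1" by blast
    qed
    then have "card {j,j'} \<ge> 4" using stop_big[OF D] by blast
    then show False using jj(4) by (simp add: card_insert_if)
  qed
  define E where "E = col ` {..<n}"
  have cE: "card E = n" unfolding E_def using card_image[OF inj] by simp
  have EP: "E \<subseteq> pairs {..<m}" unfolding E_def pairs_def using ccol colm by auto
  have tf: "tfree E" unfolding tfree_def
  proof (intro allI impI)
    fix x y z assume a: "{x,y} \<in> E" "{y,z} \<in> E" "{x,z} \<in> E"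
    have d: "x \<noteq> y" "y \<noteq> z" "x \<noteq> z"
    proof -
      have "{x,y} \<in> pairs {..<m}" "{y,z} \<in> pairs {..<m}" "{x,z} \<in> pairs {..<m}" using a EP by auto
      then show "x \<noteq> y" "y \<noteq> z" "x \<noteq> z" unfolding pairs_def by auto
    qed
    obtain j1 where j1: "j1 < n" "col j1 = {x,y}" using a(1) unfolding E_def by auto
    obtain j2 where j2: "j2 < n" "col j2 = {y,z}" using a(2) unfolding E_def by auto
    obtain j3 where j3: "j3 < n" "col j3 = {x,z}" using a(3) unfolding E_def by auto
    have dj: "j1 \<noteq> j2" "j2 \<noteq> j3" "j1 \<noteq> j3"
      using j1 j2 j3 d by (auto simp: doubleton_eq_iff)
    have "stopping_set m n M {j1,j2,j3}" unfolding stopping_set_def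
    proof (intro conjI allI impI)
      show "{j1,j2,j3} \<noteq> {}" by simp
      show "{j1,j2,j3} \<subseteq> {..<n}" using j1 j2 j3 by auto
    next
      fix i assume i: "i < m"
      have e1: "M i j1 \<longleftrightarrow> i = x \<or> i = y" using j1(2) colm[of i j1] i by auto
      have e2: "M i j2 \<longleftrightarrow> i = y \<or> i = z" using j2(2) colm[of i j2] i by auto
      have e3: "M i j3 \<longleftrightarrow> i = x \<or> i = z" using j3(2) colm[of i j3] i by auto
      have "{k\<in>{j1,j2,j3}. M i k} = {j1,j3} \<or> {k\<in>{j1,j2,j3}. M i k} = {j1,j2} \<or>
            {k\<in>{j1,j2,j3}. M i k} = {j2,j3} \<or> {k\<in>{j1,j2,j3}. M i k} = {}"
      proof -
        consider "i = x" | "i = y" | "i = z" | "i \<noteq> x \<and> i \<noteq> y \<and> i \<noteq> z" by blast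
        then show ?thesis
        proof cases
          case 1 then have "{k\<in>{j1,j2,j3}. M i k} = {j1,j3}" using e1 e2 e3 d by auto
          then show ?thesis by blast
        next
          case 2 then have "{k\<in>{j1,j2,j3}. M i k} = {j1,j2}" using e1 e2 e3 d by auto
          then show ?thesis by blast
        next
          case 3 then have "{k\<in>{j1,j2,j3}. M i k} = {j2,j3}" using e1 e2 e3 d by auto
          then show ?thesis by blast
        next
          case 4 then have "{k\<in>{j1,j2,j3}. M i k} = {}" using e1 e2 e3 d by auto
          then show ?thesis by blast
        qed
      qed
      moreover have "\<And>T. T = {j1,j3} \<or> T = {j1,j2} \<or> T = {j2,j3} \<or> T = {} \<Longrightarrow> card T \<noteq> 1"
        using dj by auto
      ultimately show "card {k\<in>{j1,j2,j3}. M i k} \<noteq> 1" by blast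
    qed
    then have "card {j1,j2,j3} \<ge> 4" using stop_big[OF D] by blast
    then show False using dj by (simp add: card_insert_if)
  qed
  have "4 * card E \<le> card {..<m} ^ 2" by (rule mantel[OF _ EP tf]) simp
  then show ?thesis using cE by simp
qed



theorem theorem6p3:
  fixes n :: nat
  assumes "n \<ge> 1"
  shows "mstar n 3 2 = (LEAST m. int (m choose 2) - int (K m 2 3 1) \<ge> int n)
       \<and> int (mstar n 3 2) = \<lceil>2 * sqrt (real n)\<rceil>"
proof -
  define L where "L = (LEAST m. 4*n \<le> m^2)"
  have dec: "(\<exists>M. decodable m n 3 2 M) \<longleftrightarrow> 4*n \<le> m^2" for m
    using construct[OF assms] necessary by blast
  have kk: "(int (m choose 2) - int (K m 2 3 1) \<ge> int n) \<longleftrightarrow> 4*n \<le> m^2" for m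
  proof -
    have "int (m choose 2) - int (K m 2 3 1) = int ((m div 2) * (m - m div 2))"
      using K_val[of m] by (simp add: of_nat_diff)
    then show ?thesis using arith4[of n m] by (simp only: of_nat_le_iff)
  qed
  have e1: "mstar n 3 2 = L" unfolding mstar_def L_def dec by simp
  have e2: "(LEAST m. int (m choose 2) - int (K m 2 3 1) \<ge> int n) = L" unfolding L_def kk by simp
  have L1: "4*n \<le> L^2" unfolding L_def
  proof (rule LeastI)
    show "4*n \<le> (2*n)^2" using assms by (simp add: power2_eq_square)
  qed
  have L0: "L \<ge> 1" using L1 assms by (cases L) auto
  have L2: "\<not> 4*n \<le> (L-1)^2" unfolding L_def
    by (rule not_less_Least) (use L0 in \<open>simp add: L_def\<close>)
  have s4: "2 * sqrt (real n) = sqrt (real (4*n))"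
    by (simp add: real_sqrt_mult)
  have up: "2 * sqrt (real n) \<le> real L"
  proof -
    have "real (4*n) \<le> (real L)^2" using L1 by (metis of_nat_le_iff of_nat_power)
    then have "sqrt (real (4*n)) \<le> sqrt ((real L)^2)" by (rule real_sqrt_le_mono)
    then show ?thesis using s4 by simp
  qed
  have low: "real L - 1 < 2 * sqrt (real n)"
  proof -
    have "(L-1)^2 < 4*n" using L2 by simp
    then have "real ((L-1)^2) < real (4*n)" by (simp only: of_nat_less_iff)
    then have "(real L - 1)^2 < real (4*n)" using L0 by (simp add: of_nat_diff)
    then have "sqrt ((real L - 1)^2) < sqrt (real (4*n))" by (rule real_sqrt_less_mono)
    then show ?thesis using s4 L0 by simp
  qed
  have "\<lceil>2 * sqrt (real n)\<rceil> = int L"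
    by (rule ceiling_unique) (use up low in auto)
  then show ?thesis using e1 e2 by simp
qed


end
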